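(* Let $k>0$ be sufficiently large, let $f_k:\mathbb T^2\to\mathbb T^2$ be the standard map, and for $z\in\mathbb T^2$ let $e^{(1)}(z)$ (resp. $e^{(-1)}(z)$) be the most contracted direction of $Df_k(z)$ (resp. of $D(f_k^{-1})(z)$). Then the set $$\mathcal C^{(1)}=\{z\in\mathbb T^2:\ e^{(1)}(z)\text{ and } e^{(-1)}(z)\text{ span the same line}\}$$ of tangencies between the foliations $\mathcal E^{(1)}$ and $\mathcal E^{(-1)}$ consists of two smooth curves, contained in $$\hat\Delta_T=\{(x,y): y\in[\hat\delta^-_T,\hat\delta^+_T]\cup[1-\hat\delta^+_T,1-\hat\delta^-_T]\},$$ and, in the coordinates $(\tilde y,y)$ with $\tilde y=y-x \bmod 1$, $\mathcal C^{(1)}$ is the graph $\{(\tilde y,y): y\in\Gamma(\tilde y)\}$ of the multivalued function $\Gamma$ defined below.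
   Context: The standard map with parameter $k>0$ is $f_k(x,y)=(x+k\sin(2\pi y),\,x+y+k\sin(2\pi y)) \bmod 1$ on $\mathbb T^2=\mathbb R^2/\mathbb Z^2$; its inverse is $f_k^{-1}(x,y)=(x-k\sin 2\pi(y-x),\,y-x)\bmod 1$. For an invertible linear map $A$ of $\mathbb R^2$ with $\min_{\|v\|=1}\|Av\|<\max_{\|v\|=1}\|Av\|$, the most contracted direction is the line spanned by a unit vector $v$ minimizing $\|Av\|$ (the most expanded direction is the one maximizing it). The foliations $\mathcal E^{(1)}$, $\mathcal E^{(-1)}$ are the integral curves of the direction fields $e^{(1)}$, $e^{(-1)}$. Inverse trigonometric functions take values $\cos^{-1}:[-1,1]\to[0,\pi]$, $\tan^{-1}:\mathbb R\to[-\pi/2,\pi/2]$. Constants: $\delta^*=\frac1{2\pi}\cos^{-1}\!\left(-\frac{1}{4\pi k}\right)$, $\delta^{\pm}=\frac1{2\pi}\cos^{-1}\!\left(-\frac{1\pm\sqrt3}{4\pi k}\right)$, $\hat\delta^-_T=\frac1{2\pi}\cos^{-1}\!\left(-\frac{1+\sqrt3/3}{4\pi k}\right)$, $\hat\delta^+_T=\frac1{2\pi}\cos^{-1}\!\left(-\frac{1+3\sqrt3}{4\pi k}\right)$ (for large $k$ these satisfy $\delta^-<1/4<\delta^*<\hat\delta^-_T<\delta^+<\hat\delta^+_T$). For $\tilde y\in[0,1)$ let $\tilde\psi_c(\tilde y)=2\pi k\cos(2\pi\tilde y)$ and $\tilde\varphi(\tilde y)=-\frac{2(\tilde\psi_c^2+\tilde\psi_c+1)}{1+2\tilde\psi_c}$.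 Let $\Phi(\tilde y)$ be the set of $y\in[0,1)$ with $2\pi k\cos(2\pi y)=\frac{-(\tilde\varphi+2)\pm\sqrt{3\tilde\varphi^2+4}}{2\tilde\varphi}$, $\tilde\varphi=\tilde\varphi(\tilde y)$ (either sign), i.e. $y=\frac1{2\pi}\cos^{-1}\frac{-(\tilde\varphi+2)\pm\sqrt{3\tilde\varphi^2+4}}{4\pi k\tilde\varphi}$ or $1$ minus such a value. Define $\Gamma(\tilde y)=\Phi(\tilde y)\cap\big([\delta^-,\delta^+]\cup[1-\delta^+,1-\delta^-]\big)$ if $\tilde y\in[0,\delta^*]\cup[1-\delta^*,1]$, and $\Gamma(\tilde y)=\Phi(\tilde y)\cap[\delta^+,1-\delta^+]$ if $\tilde y\in[\delta^*,1-\delta^*]$. *)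

theory Defs
  imports "HOL-Analysis.Analysis"
begin

(* Points of the torus T^2 = R^2/Z^2 are represented by their unique representative
   in [0,1) x [0,1); tangent vectors are elements of real x real (Euclidean norm). *)

definition torus_rep :: "(real \<times> real) set" where
  "torus_rep = {0..<1} \<times> {0..<1}"

definition torus_proj :: "real \<times> real \<Rightarrow> real \<times> real" where
  "torus_proj z = (frac (fst z), frac (snd z))"

(* Lifts to R^2 of the standard map f_k and of its inverse (their derivatives are Df_k, D(f_k^-1)). *)
definition std_map_lift :: "real \<Rightarrow> real \<times> real \<Rightarrow> real \<times> real" where
  "std_map_lift k z = (let x = fst z; y = snd z in
      (x + k * sin (2 * pi * y), x + y + k * sin (2 * pi * y)))"

definition std_map_inv_lift :: "real \<Rightarrow> real \<times> real \<Rightarrow> real \<times> real" where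
  "std_map_inv_lift k z = (let x = fst z; y = snd z in
      (x - k * sin (2 * pi * (y - x)), y - x))"

definition most_contracted_line :: "(real \<times> real \<Rightarrow> real \<times> real) \<Rightarrow> (real \<times> real) set \<Rightarrow> bool" where
  "most_contracted_line A L \<longleftrightarrow>
     (\<exists>v. norm v = 1 \<and> (\<forall>w. norm w = 1 \<longrightarrow> norm (A v) \<le> norm (A w)) \<and> L = span {v})"

definition e_plus :: "real \<Rightarrow> real \<times> real \<Rightarrow> (real \<times> real) set \<Rightarrow> bool" where
  "e_plus k z L \<longleftrightarrow> (\<exists>A. (std_map_lift k has_derivative A) (at z) \<and> most_contracted_line A L)"

definition e_minus :: "real \<Rightarrow> real \<times> real \<Rightarrow> (real \<times> real) set \<Rightarrow> bool" where
  "e_minus k z L \<longleftrightarrow> (\<exists>A. (std_map_inv_lift k has_derivative A) (at z) \<and> most_contracted_line A L)"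

definition tangency_set :: "real \<Rightarrow> (real \<times> real) set" where
  "tangency_set k = {z \<in> torus_rep. \<exists>L. e_plus k z L \<and> e_minus k z L}"

definition delta_star :: "real \<Rightarrow> real" where
  "delta_star k = arccos (- 1 / (4 * pi * k)) / (2 * pi)"
definition delta_plus :: "real \<Rightarrow> real" where
  "delta_plus k = arccos (- (1 + sqrt 3) / (4 * pi * k)) / (2 * pi)"
definition delta_minus :: "real \<Rightarrow> real" where
  "delta_minus k = arccos (- (1 - sqrt 3) / (4 * pi * k)) / (2 * pi)"
definition delta_hat_T_minus :: "real \<Rightarrow> real" where
  "delta_hat_T_minus k = arccos (- (1 + sqrt 3 / 3) / (4 * pi * k)) / (2 * pi)"
definition delta_hat_T_plus :: "real \<Rightarrow> real" where
  "delta_hat_T_plus k = arccos (- (1 + 3 * sqrt 3) / (4 * pi * k)) / (2 * pi)"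

definition Delta_hat_T :: "real \<Rightarrow> (real \<times> real) set" where
  "Delta_hat_T k = {z. snd z \<in> {delta_hat_T_minus k .. delta_hat_T_plus k}
                        \<union> {1 - delta_hat_T_plus k .. 1 - delta_hat_T_minus k}}"

definition psi_c :: "real \<Rightarrow> real \<Rightarrow> real" where
  "psi_c k yt = 2 * pi * k * cos (2 * pi * yt)"

definition phi_t :: "real \<Rightarrow> real \<Rightarrow> real" where
  "phi_t k yt = - 2 * ((psi_c k yt)\<^sup>2 + psi_c k yt + 1) / (1 + 2 * psi_c k yt)"

definition Phi_set :: "real \<Rightarrow> real \<Rightarrow> real set" where
  "Phi_set k yt = {y \<in> {0..<1}. let \<phi> = phi_t k yt in
      2 * pi * k * cos (2 * pi * y) = (- (\<phi> + 2) + sqrt (3 * \<phi>\<^sup>2 + 4)) / (2 * \<phi>) \<or>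
      2 * pi * k * cos (2 * pi * y) = (- (\<phi> + 2) - sqrt (3 * \<phi>\<^sup>2 + 4)) / (2 * \<phi>)}"

definition Gamma_set :: "real \<Rightarrow> real \<Rightarrow> real set" where
  "Gamma_set k yt =
     (if yt \<in> {0..delta_star k} \<union> {1 - delta_star k..1}
      then Phi_set k yt \<inter> ({delta_minus k..delta_plus k} \<union> {1 - delta_plus k..1 - delta_minus k})
      else Phi_set k yt \<inter> {delta_plus k..1 - delta_plus k})"

fun nth_vderiv :: "nat \<Rightarrow> (real \<Rightarrow> 'a::real_normed_vector) \<Rightarrow> real \<Rightarrow> 'a" where
  "nth_vderiv 0 g = g"
| "nth_vderiv (Suc n) g = (\<lambda>t. vector_derivative (nth_vderiv n g) (at t))"

definition smooth_regular_curve :: "(real \<Rightarrow> real \<times> real) \<Rightarrow> bool" where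
  "smooth_regular_curve g \<longleftrightarrow>
     (\<forall>n t. nth_vderiv n g differentiable (at t)) \<and> (\<forall>t. vector_derivative g (at t) \<noteq> 0)"

definition two_smooth_curves :: "(real \<times> real) set \<Rightarrow> bool" where
  "two_smooth_curves S \<longleftrightarrow>
     (\<exists>g1 g2. smooth_regular_curve g1 \<and> smooth_regular_curve g2 \<and>
        torus_proj ` range g1 \<inter> torus_proj ` range g2 = {} \<and>
        S = torus_proj ` range g1 \<union> torus_proj ` range g2)"

end

theory Submission
  imports Defs "HOL-Complex_Analysis.Cauchy_Integral_Formula"
begin


lemma unit_circle_param:
  fixes u1 u2 :: real
  assumes "u1\<^sup>2 + u2\<^sup>2 = 1"
  shows "\<exists>a b. a\<^sup>2 + b\<^sup>2 = 1 \<and> a\<^sup>2 - b\<^sup>2 = u1 \<and> 2*a*b = u2"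
proof -
  have "\<bar>u1\<bar> \<le> 1" using assms by (metis abs_square_le_1 le_add_same_cancel1 zero_le_power2)
  then have u1: "-1 \<le> u1" "u1 \<le> 1" by auto
  define a where "a = sqrt ((1+u1)/2)"
  define b where "b = (if u2 \<ge> 0 then 1 else -1) * sqrt ((1-u1)/2)"
  have a2: "a\<^sup>2 = (1+u1)/2" using u1 by (simp add: a_def)
  have b2: "b\<^sup>2 = (1-u1)/2" using u1 by (simp add: b_def power_mult_distrib)
  have "(2*a*b)\<^sup>2 = 4*a\<^sup>2*b\<^sup>2" by (simp add: power_mult_distrib)
  also have "\<dots> = (2*a\<^sup>2)*(2*b\<^sup>2)" by simp
  also have "\<dots> = (1+u1)*(1-u1)" unfolding a2 b2 by (simp; algebra)
  also have "\<dots> = 1 - u1\<^sup>2" by (simp add: algebra_simps power2_eq_square)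
  also have "\<dots> = u2\<^sup>2" using assms by simp
  finally have "(2*a*b)\<^sup>2 = u2\<^sup>2" .
  moreover have "a \<ge> 0" using u1 by (simp add: a_def)
  moreover have "sqrt((1-u1)/2) \<ge> 0" using u1 by simp
  ultimately have "2*a*b = u2"
  proof (cases "u2 \<ge> 0")
    case True
    then have "b \<ge> 0" using \<open>sqrt((1-u1)/2) \<ge> 0\<close> by (simp add: b_def)
    then have "2*a*b \<ge> 0" using \<open>a \<ge> 0\<close> by simp
    then show ?thesis using True \<open>(2*a*b)\<^sup>2 = u2\<^sup>2\<close> by (simp add: power2_eq_iff_nonneg)
  next
    case False
    then have "b \<le> 0" using \<open>sqrt((1-u1)/2) \<ge> 0\<close> by (simp add: b_def)
    then have "-(2*a*b) \<ge> 0" using \<open>a \<ge> 0\<close> by (simp add: mult_nonneg_nonpos)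
    moreover have "(-(2*a*b))\<^sup>2 = (-u2)\<^sup>2" using \<open>(2*a*b)\<^sup>2 = u2\<^sup>2\<close> by simp
    ultimately have "-(2*a*b) = -u2" using False by (subst power2_eq_iff_nonneg[symmetric]) auto
    then show ?thesis by simp
  qed
  moreover have "a\<^sup>2 + b\<^sup>2 = 1" "a\<^sup>2 - b\<^sup>2 = u1" using a2 b2 by auto
  ultimately show ?thesis by blast
qed

lemma norm_pair_sq: "(norm (a::real, b::real))\<^sup>2 = a\<^sup>2 + b\<^sup>2"
  by (simp add: norm_Pair)

lemma val_bound:
  fixes al be u1 u2 :: real
  assumes "u1\<^sup>2 + u2\<^sup>2 = 1"
  shows "(al*u1 + be*u2)\<^sup>2 + (al*u2 - be*u1)\<^sup>2 = al\<^sup>2 + be\<^sup>2"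
proof -
  have "(al*u1 + be*u2)\<^sup>2 + (al*u2 - be*u1)\<^sup>2 = (al\<^sup>2 + be\<^sup>2) * (u1\<^sup>2 + u2\<^sup>2)"
    by (simp add: power2_eq_square algebra_simps)
  then show ?thesis using assms by simp
qed

lemma min_char:
  fixes f :: "real \<times> real \<Rightarrow> real \<times> real" and m al be a b :: real
  assumes Q: "\<And>a b. (norm (f (a,b)))\<^sup>2 = m*(a\<^sup>2+b\<^sup>2) + al*(a\<^sup>2-b\<^sup>2) + be*(2*a*b)"
    and nz: "al \<noteq> 0 \<or> be \<noteq> 0" and v: "a\<^sup>2 + b\<^sup>2 = 1"
  shows "(\<forall>w. norm w = 1 \<longrightarrow> norm (f (a,b)) \<le> norm (f w)) \<longleftrightarrow>
         (al*(2*a*b) = be*(a\<^sup>2-b\<^sup>2) \<and> al*(a\<^sup>2-b\<^sup>2) + be*(2*a*b) < 0)"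
proof -
  define R where "R = sqrt (al\<^sup>2 + be\<^sup>2)"
  have Rpos: "R > 0" using nz by (auto simp: R_def add_pos_nonneg add_nonneg_pos)
  have R2: "R\<^sup>2 = al\<^sup>2 + be\<^sup>2" unfolding R_def by simp
  have unit: "\<And>a b::real. a\<^sup>2+b\<^sup>2 = 1 \<Longrightarrow> (a\<^sup>2-b\<^sup>2)\<^sup>2 + (2*a*b)\<^sup>2 = 1"
  proof -
    fix a b :: real assume "a\<^sup>2+b\<^sup>2 = 1"
    moreover have "(a\<^sup>2-b\<^sup>2)\<^sup>2 + (2*a*b)\<^sup>2 = (a\<^sup>2+b\<^sup>2)\<^sup>2" by (simp add: power2_eq_square algebra_simps)
    ultimately show "(a\<^sup>2-b\<^sup>2)\<^sup>2 + (2*a*b)\<^sup>2 = 1" by simp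
  qed
  have ge: "\<And>u1 u2. u1\<^sup>2+u2\<^sup>2 = 1 \<Longrightarrow> al*u1 + be*u2 \<ge> -R"
  proof -
    fix u1 u2 :: real assume "u1\<^sup>2+u2\<^sup>2 = 1"
    have "(al*u1 + be*u2)\<^sup>2 \<le> (al*u1 + be*u2)\<^sup>2 + (al*u2 - be*u1)\<^sup>2" by simp
    also have "\<dots> = R\<^sup>2" using val_bound[OF \<open>u1\<^sup>2+u2\<^sup>2 = 1\<close>, of al be] R2 by simp
    finally have "\<bar>al*u1 + be*u2\<bar> \<le> \<bar>R\<bar>" by (simp add: abs_le_square_iff)
    then show "al*u1 + be*u2 \<ge> -R" using Rpos by linarith
  qed
  have eqR: "\<And>u1 u2. u1\<^sup>2+u2\<^sup>2 = 1 \<Longrightarrow> (al*u1 + be*u2 = -R) \<longleftrightarrow> (al*u2 = be*u1 \<and> al*u1 + be*u2 < 0)"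
  proof -
    fix u1 u2 :: real assume h: "u1\<^sup>2+u2\<^sup>2 = 1"
    note vb = val_bound[OF h, of al be]
    show "(al*u1 + be*u2 = -R) \<longleftrightarrow> (al*u2 = be*u1 \<and> al*u1 + be*u2 < 0)"
    proof
      assume e: "al*u1 + be*u2 = -R"
      then have "(al*u2 - be*u1)\<^sup>2 = 0" using vb R2 by (simp add: power2_minus)
      then show "al*u2 = be*u1 \<and> al*u1 + be*u2 < 0" using e Rpos by simp
    next
      assume e: "al*u2 = be*u1 \<and> al*u1 + be*u2 < 0"
      then have "(al*u1 + be*u2)\<^sup>2 = R\<^sup>2" using vb R2 by simp
      then have "(-(al*u1 + be*u2))\<^sup>2 = R\<^sup>2" by (simp only: power2_minus)
      then have "-(al*u1 + be*u2) = R" using e Rpos by (subst power2_eq_iff_nonneg[symmetric]) auto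
      then show "al*u1 + be*u2 = -R" by simp
    qed
  qed
  have normle: "\<And>w. norm w = 1 \<Longrightarrow> (norm (f (a,b)) \<le> norm (f w)) \<longleftrightarrow>
       al*(a\<^sup>2-b\<^sup>2) + be*(2*a*b) \<le> al*((fst w)\<^sup>2-(snd w)\<^sup>2) + be*(2*fst w * snd w)"
  proof -
    fix w :: "real \<times> real" assume w: "norm w = 1"
    obtain c d where wcd: "w = (c,d)" by (cases w)
    have cd: "c\<^sup>2 + d\<^sup>2 = 1" using w wcd norm_pair_sq[of c d] by simp
    have "(norm (f (a,b)) \<le> norm (f w)) \<longleftrightarrow> (norm (f (a,b)))\<^sup>2 \<le> (norm (f (c,d)))\<^sup>2"
      using wcd by (simp add: power_mono_iff)
    also have "\<dots> \<longleftrightarrow> al*(a\<^sup>2-b\<^sup>2) + be*(2*a*b) \<le> al*(c\<^sup>2-d\<^sup>2) + be*(2*c*d)"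
      unfolding Q using v cd by simp
    finally show "(norm (f (a,b)) \<le> norm (f w)) \<longleftrightarrow>
       al*(a\<^sup>2-b\<^sup>2) + be*(2*a*b) \<le> al*((fst w)\<^sup>2-(snd w)\<^sup>2) + be*(2*fst w * snd w)" using wcd by simp
  qed
  show ?thesis
  proof
    assume H: "\<forall>w. norm w = 1 \<longrightarrow> norm (f (a,b)) \<le> norm (f w)"
    have "(-al/R)\<^sup>2 + (-be/R)\<^sup>2 = (al\<^sup>2 + be\<^sup>2)/R\<^sup>2" by (simp add: power_divide add_divide_distrib)
    also have "\<dots> = 1" using Rpos by (simp add: R2[symmetric])
    finally have "(-al/R)\<^sup>2 + (-be/R)\<^sup>2 = 1" .
    from unit_circle_param[OF this] obtain c d where cd: "c\<^sup>2+d\<^sup>2 = 1" "c\<^sup>2-d\<^sup>2 = -al/R" "2*c*d = -be/R" by blast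
    have "norm (c,d) = 1" using cd by (simp add: norm_Pair)
    with H normle have "al*(a\<^sup>2-b\<^sup>2) + be*(2*a*b) \<le> al*(c\<^sup>2-d\<^sup>2) + be*(2*c*d)" by fastforce
    also have "\<dots> = al*(-al/R) + be*(-be/R)" using cd by simp
    also have "\<dots> = -(al\<^sup>2+be\<^sup>2)/R" by (simp add: power2_eq_square diff_divide_distrib add_divide_distrib)
    also have "\<dots> = -R" using Rpos by (simp only: R2[symmetric]) (simp add: power2_eq_square)
    finally have "al*(a\<^sup>2-b\<^sup>2) + be*(2*a*b) = -R" using ge[OF unit[OF v]] by linarith
    then show "al*(2*a*b) = be*(a\<^sup>2-b\<^sup>2) \<and> al*(a\<^sup>2-b\<^sup>2) + be*(2*a*b) < 0"
      using eqR[OF unit[OF v]] by simp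
  next
    assume "al*(2*a*b) = be*(a\<^sup>2-b\<^sup>2) \<and> al*(a\<^sup>2-b\<^sup>2) + be*(2*a*b) < 0"
    then have e: "al*(a\<^sup>2-b\<^sup>2) + be*(2*a*b) = -R" using eqR[OF unit[OF v]] by simp
    show "\<forall>w. norm w = 1 \<longrightarrow> norm (f (a,b)) \<le> norm (f w)"
    proof (intro allI impI)
      fix w :: "real\<times>real" assume w: "norm w = 1"
      have "(fst w)\<^sup>2 + (snd w)\<^sup>2 = 1" using w norm_pair_sq[of "fst w" "snd w"] by simp
      from ge[OF unit[OF this]] e normle[OF w] show "norm (f (a,b)) \<le> norm (f w)" by simp
    qed
  qed
qed


definition Pp :: "real \<Rightarrow> real" where "Pp t = t\<^sup>2 + t + 1"
definition qq :: "real \<Rightarrow> real" where "qq t = 1 + 2*t"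
definition SS :: "real \<Rightarrow> real" where "SS t = sqrt (3*(Pp t)\<^sup>2 + (qq t)\<^sup>2)"
definition psim :: "real \<Rightarrow> real" where "psim t = (qq t - Pp t - SS t) / (2 * Pp t)"
definition psip :: "real \<Rightarrow> real" where "psip t = (qq t - Pp t + SS t) / (2 * Pp t)"

lemma Pp_pos: "Pp t > 0"
proof -
  have "Pp t = (t + 1/2)\<^sup>2 + 3/4" by (simp add: Pp_def power2_eq_square algebra_simps)
  moreover have "(t + 1/2)\<^sup>2 \<ge> 0" by simp
  ultimately show ?thesis by linarith
qed

lemma SS_sq: "(SS t)\<^sup>2 = 3*(Pp t)\<^sup>2 + (qq t)\<^sup>2"
  unfolding SS_def by simp

lemma SS_gt: "SS t > \<bar>qq t\<bar>"
proof -
  have "sqrt ((qq t)\<^sup>2) < SS t" unfolding SS_def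
    using Pp_pos[of t] by (intro real_sqrt_less_mono) simp
  then show ?thesis by simp
qed

lemma both_char:
  fixes alA beA alB beB :: real
  assumes nA: "alA \<noteq> 0 \<or> beA \<noteq> 0" and nB: "alB \<noteq> 0 \<or> beB \<noteq> 0"
  shows "(\<exists>a b. a\<^sup>2+b\<^sup>2 = 1 \<and>
            (alA*(2*a*b) = beA*(a\<^sup>2-b\<^sup>2) \<and> alA*(a\<^sup>2-b\<^sup>2) + beA*(2*a*b) < 0) \<and>
            (alB*(2*a*b) = beB*(a\<^sup>2-b\<^sup>2) \<and> alB*(a\<^sup>2-b\<^sup>2) + beB*(2*a*b) < 0))
         \<longleftrightarrow> (alA*beB = beA*alB \<and> alA*alB + beA*beB > 0)"
proof
  assume "\<exists>a b. a\<^sup>2+b\<^sup>2 = 1 \<and>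
            (alA*(2*a*b) = beA*(a\<^sup>2-b\<^sup>2) \<and> alA*(a\<^sup>2-b\<^sup>2) + beA*(2*a*b) < 0) \<and>
            (alB*(2*a*b) = beB*(a\<^sup>2-b\<^sup>2) \<and> alB*(a\<^sup>2-b\<^sup>2) + beB*(2*a*b) < 0)"
  then obtain a b where ab: "a\<^sup>2+b\<^sup>2 = 1"
    and cA: "alA*(2*a*b) = beA*(a\<^sup>2-b\<^sup>2)" "alA*(a\<^sup>2-b\<^sup>2) + beA*(2*a*b) < 0"
    and cB: "alB*(2*a*b) = beB*(a\<^sup>2-b\<^sup>2)" "alB*(a\<^sup>2-b\<^sup>2) + beB*(2*a*b) < 0" by blast
  define u1 where "u1 = a\<^sup>2-b\<^sup>2"
  define u2 where "u2 = 2*a*b"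
  have u: "u1\<^sup>2 + u2\<^sup>2 = 1"
  proof -
    have "u1\<^sup>2 + u2\<^sup>2 = (a\<^sup>2+b\<^sup>2)\<^sup>2" unfolding u1_def u2_def by (simp add: power2_eq_square algebra_simps)
    then show ?thesis using ab by simp
  qed
  define mA where "mA = alA*u1 + beA*u2"
  define mB where "mB = alB*u1 + beB*u2"
  have idA: "alA = u1*mA + u2*(alA*u2 - beA*u1)" "beA = u2*mA - u1*(alA*u2 - beA*u1)"
    unfolding mA_def using u by (simp_all add: algebra_simps power2_eq_square, 
      metis (no_types, lifting) distrib_left mult.right_neutral mult.commute,
      metis (no_types, lifting) distrib_left mult.right_neutral mult.commute add.commute)
  have idB: "alB = u1*mB + u2*(alB*u2 - beB*u1)" "beB = u2*mB - u1*(alB*u2 - beB*u1)"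
    unfolding mB_def using u by (simp_all add: algebra_simps power2_eq_square, 
      metis (no_types, lifting) distrib_left mult.right_neutral mult.commute,
      metis (no_types, lifting) distrib_left mult.right_neutral mult.commute add.commute)
  have zA: "alA*u2 - beA*u1 = 0" using cA unfolding u1_def u2_def by simp
  have zB: "alB*u2 - beB*u1 = 0" using cB unfolding u1_def u2_def by simp
  have A: "alA = u1*mA" "beA = u2*mA" using idA zA by (metis mult_zero_right diff_zero add_0_right)+
  have B: "alB = u1*mB" "beB = u2*mB" using idB zB by (metis mult_zero_right diff_zero add_0_right)+
  have neg: "mA < 0" "mB < 0" using cA cB unfolding mA_def mB_def u1_def u2_def by simp_all
  have "alA*beB = beA*alB" unfolding A B by simp
  moreover have "alA*alB + beA*beB = mA*mB*(u1\<^sup>2+u2\<^sup>2)" unfolding A B by (simp add: power2_eq_square algebra_simps)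
  moreover have "mA*mB > 0" using neg by (simp add: mult_neg_neg)
  ultimately show "alA*beB = beA*alB \<and> alA*alB + beA*beB > 0" using u by simp
next
  assume H: "alA*beB = beA*alB \<and> alA*alB + beA*beB > 0"
  define R where "R = sqrt (alA\<^sup>2 + beA\<^sup>2)"
  have Rpos: "R > 0" using nA by (auto simp: R_def add_pos_nonneg add_nonneg_pos)
  have R2: "R\<^sup>2 = alA\<^sup>2 + beA\<^sup>2" unfolding R_def by simp
  have "(-alA/R)\<^sup>2 + (-beA/R)\<^sup>2 = (alA\<^sup>2 + beA\<^sup>2)/R\<^sup>2" by (simp add: power_divide add_divide_distrib)
  also have "\<dots> = 1" using Rpos by (simp add: R2[symmetric])
  finally have "(-alA/R)\<^sup>2 + (-beA/R)\<^sup>2 = 1" .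
  from unit_circle_param[OF this] obtain a b where ab: "a\<^sup>2+b\<^sup>2 = 1" "a\<^sup>2-b\<^sup>2 = -alA/R" "2*a*b = -beA/R" by blast
  have "alA*(2*a*b) = beA*(a\<^sup>2-b\<^sup>2)" unfolding ab by simp
  moreover have "alA*(a\<^sup>2-b\<^sup>2) + beA*(2*a*b) = -(alA\<^sup>2+beA\<^sup>2)/R"
    unfolding ab by (simp add: power2_eq_square diff_divide_distrib add_divide_distrib)
  moreover have "-(alA\<^sup>2+beA\<^sup>2)/R < 0"
  proof -
    have "alA\<^sup>2+beA\<^sup>2 > 0" using Rpos R2 by (metis zero_less_power2 less_irrefl)
    then show ?thesis using Rpos by (simp only: minus_divide_left[symmetric] neg_less_0_iff_less) simp
  qed
  moreover have "alB*(2*a*b) = beB*(a\<^sup>2-b\<^sup>2)" unfolding ab using H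
    by (simp add: field_simps)
  moreover have "alB*(a\<^sup>2-b\<^sup>2) + beB*(2*a*b) = -(alA*alB + beA*beB)/R"
    unfolding ab by (simp add: algebra_simps diff_divide_distrib add_divide_distrib)
  moreover have "-(alA*alB + beA*beB)/R < 0" using Rpos H
    by (simp only: minus_divide_left[symmetric] neg_less_0_iff_less) simp
  ultimately show "\<exists>a b. a\<^sup>2+b\<^sup>2 = 1 \<and>
            (alA*(2*a*b) = beA*(a\<^sup>2-b\<^sup>2) \<and> alA*(a\<^sup>2-b\<^sup>2) + beA*(2*a*b) < 0) \<and>
            (alB*(2*a*b) = beB*(a\<^sup>2-b\<^sup>2) \<and> alB*(a\<^sup>2-b\<^sup>2) + beB*(2*a*b) < 0)"
    using ab(1) by (intro exI[of _ a] exI[of _ b]) argo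
qed


lemma psi_cond:
  fixes p t :: real
  shows "(((1 - 2*p - 2*p\<^sup>2)/2) * (-(t\<^sup>2+t+1)) = (1+2*p) * ((1+2*t)/2) \<and>
          ((1 - 2*p - 2*p\<^sup>2)/2) * ((1+2*t)/2) + (1+2*p) * (-(t\<^sup>2+t+1)) > 0)
         \<longleftrightarrow> p = psim t"
proof -
  define P where "P = Pp t"
  define q where "q = qq t"
  define S where "S = SS t"
  have Ppos: "P > 0" unfolding P_def by (rule Pp_pos)
  have S2: "S\<^sup>2 = 3*P\<^sup>2 + q\<^sup>2" unfolding S_def P_def q_def by (rule SS_sq)
  have Sq: "S > \<bar>q\<bar>" unfolding S_def q_def by (rule SS_gt)
  have tP: "t\<^sup>2+t+1 = P" unfolding P_def Pp_def by simp
  have tq: "1+2*t = q" unfolding q_def qq_def by simp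
  define E where "E = 2*P*p\<^sup>2 + (2*P-2*q)*p - (P+q)"
  have cross: "((1 - 2*p - 2*p\<^sup>2)/2) * (-(t\<^sup>2+t+1)) = (1+2*p) * ((1+2*t)/2) \<longleftrightarrow> E = 0"
    unfolding tP tq E_def by (auto simp: algebra_simps power2_eq_square)
  define X where "X = 2*P*p - q + P"
  have fact: "2*P*E = (X - S)*(X + S)"
  proof -
    have "(X - S)*(X + S) = X\<^sup>2 - S\<^sup>2" by (simp add: algebra_simps power2_eq_square)
    also have "\<dots> = X\<^sup>2 - (3*P\<^sup>2 + q\<^sup>2)" using S2 by simp
    also have "\<dots> = 2*P*E" unfolding X_def E_def by (simp add: algebra_simps power2_eq_square)
    finally show ?thesis by simp
  qed
  define dot where "dot = ((1 - 2*p - 2*p\<^sup>2)/2) * ((1+2*t)/2) + (1+2*p) * (-(t\<^sup>2+t+1))"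
  have dotP: "E = 0 \<Longrightarrow> dot * P = -(1+2*p) * (q\<^sup>2/4 + P\<^sup>2)"
  proof -
    assume "E = 0"
    then have cP: "(1 - 2*p - 2*p\<^sup>2) * P = -(1+2*p)*q" unfolding E_def by (simp add: algebra_simps power2_eq_square)
    have "dot * P = ((1 - 2*p - 2*p\<^sup>2) * P) * q / 4 - (1+2*p)*P\<^sup>2"
      unfolding dot_def tP tq by (simp add: field_simps power2_eq_square)
    also have "\<dots> = -(1+2*p) * (q\<^sup>2/4 + P\<^sup>2)" unfolding cP by (simp add: algebra_simps power2_eq_square)
    finally show ?thesis .
  qed
  have psim_eq: "p = psim t \<longleftrightarrow> X = -S"
  proof -
    have "p = psim t \<longleftrightarrow> p = (q - P - S)/(2*P)" unfolding psim_def P_def q_def S_def by simp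
    also have "\<dots> \<longleftrightarrow> 2*P*p = q - P - S" using Ppos by (auto simp: field_simps)
    also have "\<dots> \<longleftrightarrow> X = -S" unfolding X_def by auto
    finally show ?thesis .
  qed
  have Xq: "(1+2*p)*P = X + q" unfolding X_def by (simp add: algebra_simps)
  have q4: "q\<^sup>2/4 + P\<^sup>2 > 0" using Ppos by (simp add: add_nonneg_pos)
  show ?thesis unfolding cross dot_def[symmetric] psim_eq
  proof
    assume H: "E = 0 \<and> 0 < dot"
    then have "(X - S)*(X + S) = 0" using fact by simp
    then have "X - S = 0 \<or> X + S = 0" by simp
    then have "X = S \<or> X = -S" by (auto simp: algebra_simps)
    moreover have "X \<noteq> S"
    proof
      assume "X = S"
      then have "(1+2*p)*P > 0" using Xq Sq by simp
      then have "1+2*p > 0" using Ppos by (simp add: zero_less_mult_iff)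
      then have "-1-2*p < 0" by simp
      then have "(-1-2*p) * (q\<^sup>2/4 + P\<^sup>2) < 0" using q4 by (rule mult_neg_pos)
      then have "dot * P < 0" using dotP H by simp
      moreover have "dot * P > 0" using H Ppos by simp
      ultimately show False by simp
    qed
    ultimately show "X = -S" by simp
  next
    assume X: "X = -S"
    then have "2*P*E = 0" using fact by simp
    then have E0: "E = 0" using Ppos by simp
    have "(1+2*p)*P < 0" using Xq Sq X by simp
    then have "1+2*p < 0" using Ppos by (simp add: mult_less_0_iff)
    then have "-1-2*p > 0" by simp
    then have "(-1-2*p) * (q\<^sup>2/4 + P\<^sup>2) > 0" using q4 by (rule mult_pos_pos)
    then have "dot * P > 0" using dotP[OF E0] by simp
    then have "dot > 0" using Ppos by (simp add: zero_less_mult_iff)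
    then show "E = 0 \<and> 0 < dot" using E0 by simp
  qed
qed


lemma deriv_plus:
  "(std_map_lift k has_derivative (\<lambda>h. (fst h + psi_c k y * snd h, fst h + snd h + psi_c k y * snd h))) (at (x,y))"
  unfolding std_map_lift_def Let_def psi_c_def
  by (rule has_derivative_eq_rhs, (rule derivative_eq_intros refl)+) (auto simp: fun_eq_iff algebra_simps)

lemma deriv_inv:
  "(std_map_inv_lift k has_derivative (\<lambda>h. (fst h - psi_c k (y-x) * (snd h - fst h), snd h - fst h))) (at (x,y))"
  unfolding std_map_inv_lift_def Let_def psi_c_def
  by (rule has_derivative_eq_rhs, (rule derivative_eq_intros refl)+) (auto simp: fun_eq_iff algebra_simps)

definition minimal :: "(real \<times> real \<Rightarrow> real \<times> real) \<Rightarrow> real \<times> real \<Rightarrow> bool" where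
  "minimal A v \<longleftrightarrow> (\<forall>w. norm w = 1 \<longrightarrow> norm (A v) \<le> norm (A w))"

lemma common_line:
  fixes A B :: "real \<times> real \<Rightarrow> real \<times> real"
  assumes lin: "\<And>c v. B (c *\<^sub>R v) = c *\<^sub>R B v"
  shows "(\<exists>L. most_contracted_line A L \<and> most_contracted_line B L) \<longleftrightarrow>
         (\<exists>v. norm v = 1 \<and> minimal A v \<and> minimal B v)"
proof
  assume "\<exists>L. most_contracted_line A L \<and> most_contracted_line B L"
  then obtain v w where v: "norm v = 1" "minimal A v" and w: "norm w = 1" "minimal B w"
    and sp: "span {v} = span {w}"
    unfolding most_contracted_line_def minimal_def by metis
  have "v \<in> span {w}" using sp by (metis span_base singletonI)
  then obtain c where c: "v = c *\<^sub>R w" by (auto simp: span_singleton)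
  have "\<bar>c\<bar> = 1" using v(1) w(1) c by simp
  then have "norm (B v) = norm (B w)" using c lin by simp
  then have "minimal B v" using w(2) unfolding minimal_def by simp
  then show "\<exists>v. norm v = 1 \<and> minimal A v \<and> minimal B v" using v by blast
next
  assume "\<exists>v. norm v = 1 \<and> minimal A v \<and> minimal B v"
  then show "\<exists>L. most_contracted_line A L \<and> most_contracted_line B L"
    unfolding most_contracted_line_def minimal_def by blast
qed

lemma tangency_iff:
  "(\<exists>L. e_plus k (x,y) L \<and> e_minus k (x,y) L) \<longleftrightarrow> psi_c k y = psim (psi_c k (y - x))"
proof -
  define p where "p = psi_c k y"
  define t where "t = psi_c k (y - x)"
  define A where "A = (\<lambda>h::real\<times>real. (fst h + p * snd h, fst h + snd h + p * snd h))"
  define B where "B = (\<lambda>h::real\<times>real. (fst h - t * (snd h - fst h), snd h - fst h))"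
  have nA: "(1 - 2*p - 2*p\<^sup>2)/2 \<noteq> 0 \<or> 1+2*p \<noteq> 0"
  proof (cases "1+2*p = 0")
    case True
    then have "p = -1/2" by simp
    then show ?thesis by (simp add: power2_eq_square)
  qed simp
  have nB: "(1+2*t)/2 \<noteq> 0 \<or> -(t\<^sup>2+t+1) \<noteq> 0" using Pp_pos[of t] by (simp add: Pp_def)
  have dA: "(std_map_lift k has_derivative A) (at (x,y))" unfolding A_def p_def by (rule deriv_plus)
  have dB: "(std_map_inv_lift k has_derivative B) (at (x,y))" unfolding B_def t_def by (rule deriv_inv)
  have "(\<exists>L. e_plus k (x,y) L \<and> e_minus k (x,y) L) \<longleftrightarrow>
        (\<exists>L. most_contracted_line A L \<and> most_contracted_line B L)"
    unfolding e_plus_def e_minus_def using has_derivative_unique[OF dA] has_derivative_unique[OF dB] dA dB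
    by metis
  also have "\<dots> \<longleftrightarrow> (\<exists>v. norm v = 1 \<and> minimal A v \<and> minimal B v)"
    by (rule common_line) (auto simp: B_def algebra_simps)
  also have "\<dots> \<longleftrightarrow> (\<exists>a b. a\<^sup>2+b\<^sup>2 = 1 \<and>
            (((1 - 2*p - 2*p\<^sup>2)/2)*(2*a*b) = (1+2*p)*(a\<^sup>2-b\<^sup>2) \<and> ((1 - 2*p - 2*p\<^sup>2)/2)*(a\<^sup>2-b\<^sup>2) + (1+2*p)*(2*a*b) < 0) \<and>
            (((1+2*t)/2)*(2*a*b) = (-(t\<^sup>2+t+1))*(a\<^sup>2-b\<^sup>2) \<and> ((1+2*t)/2)*(a\<^sup>2-b\<^sup>2) + (-(t\<^sup>2+t+1))*(2*a*b) < 0))"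
  proof -
    have QA: "\<And>a b. (norm (A (a,b)))\<^sup>2 = ((2 + p\<^sup>2 + (1+p)\<^sup>2)/2)*(a\<^sup>2+b\<^sup>2) + ((1 - 2*p - 2*p\<^sup>2)/2)*(a\<^sup>2-b\<^sup>2) + (1+2*p)*(2*a*b)"
      unfolding A_def norm_pair_sq by (simp add: power2_eq_square field_simps)
    have QB: "\<And>a b. (norm (B (a,b)))\<^sup>2 = (((1+t)\<^sup>2 + 1 + t\<^sup>2 + 1)/2)*(a\<^sup>2+b\<^sup>2) + ((1+2*t)/2)*(a\<^sup>2-b\<^sup>2) + (-(t\<^sup>2+t+1))*(2*a*b)"
      unfolding B_def norm_pair_sq by (simp add: power2_eq_square field_simps)
    have nv: "\<And>a b::real. norm (a,b) = 1 \<longleftrightarrow> a\<^sup>2 + b\<^sup>2 = 1" by (simp add: norm_Pair)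
    show ?thesis
    proof
      assume "\<exists>v. norm v = 1 \<and> minimal A v \<and> minimal B v"
      then obtain a b where ab: "norm (a,b) = 1" "minimal A (a,b)" "minimal B (a,b)" by auto
      have u: "a\<^sup>2+b\<^sup>2 = 1" using ab(1) nv by simp
      show "\<exists>a b. a\<^sup>2+b\<^sup>2 = 1 \<and>
            (((1 - 2*p - 2*p\<^sup>2)/2)*(2*a*b) = (1+2*p)*(a\<^sup>2-b\<^sup>2) \<and> ((1 - 2*p - 2*p\<^sup>2)/2)*(a\<^sup>2-b\<^sup>2) + (1+2*p)*(2*a*b) < 0) \<and>
            (((1+2*t)/2)*(2*a*b) = (-(t\<^sup>2+t+1))*(a\<^sup>2-b\<^sup>2) \<and> ((1+2*t)/2)*(a\<^sup>2-b\<^sup>2) + (-(t\<^sup>2+t+1))*(2*a*b) < 0)"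
        using u ab(2,3) min_char[OF QA nA u] min_char[OF QB nB u] unfolding minimal_def by blast
    next
      assume "\<exists>a b. a\<^sup>2+b\<^sup>2 = 1 \<and>
            (((1 - 2*p - 2*p\<^sup>2)/2)*(2*a*b) = (1+2*p)*(a\<^sup>2-b\<^sup>2) \<and> ((1 - 2*p - 2*p\<^sup>2)/2)*(a\<^sup>2-b\<^sup>2) + (1+2*p)*(2*a*b) < 0) \<and>
            (((1+2*t)/2)*(2*a*b) = (-(t\<^sup>2+t+1))*(a\<^sup>2-b\<^sup>2) \<and> ((1+2*t)/2)*(a\<^sup>2-b\<^sup>2) + (-(t\<^sup>2+t+1))*(2*a*b) < 0)"
      then obtain a b where u: "a\<^sup>2+b\<^sup>2 = 1" and
        h: "(((1 - 2*p - 2*p\<^sup>2)/2)*(2*a*b) = (1+2*p)*(a\<^sup>2-b\<^sup>2) \<and> ((1 - 2*p - 2*p\<^sup>2)/2)*(a\<^sup>2-b\<^sup>2) + (1+2*p)*(2*a*b) < 0)"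
           "(((1+2*t)/2)*(2*a*b) = (-(t\<^sup>2+t+1))*(a\<^sup>2-b\<^sup>2) \<and> ((1+2*t)/2)*(a\<^sup>2-b\<^sup>2) + (-(t\<^sup>2+t+1))*(2*a*b) < 0)"
        by blast
      have "minimal A (a,b)" "minimal B (a,b)" unfolding minimal_def
        using h min_char[OF QA nA u] min_char[OF QB nB u] by blast+
      moreover have "norm (a,b) = 1" using u nv by simp
      ultimately show "\<exists>v. norm v = 1 \<and> minimal A v \<and> minimal B v" by blast
    qed
  qed
  also have "\<dots> \<longleftrightarrow> psi_c k y = psim (psi_c k (y - x))"
    using both_char[OF nA nB] psi_cond[of p t] unfolding p_def t_def by (rule trans)
  finally show ?thesis .
qed


lemma qq_sq: "(qq t)\<^sup>2 = 4 * Pp t - 3"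
  by (simp add: qq_def Pp_def power2_eq_square algebra_simps)

lemma sq_le_sqrt: "0 \<le> b \<Longrightarrow> a \<le> b\<^sup>2 \<Longrightarrow> sqrt a \<le> b"
  by (metis real_sqrt_abs abs_of_nonneg real_sqrt_le_mono)

lemma sq_lt_sqrt: "b\<^sup>2 < a \<Longrightarrow> b < sqrt a"
  by (metis real_sqrt_abs abs_ge_self order_le_less_trans real_sqrt_less_mono)

lemma key_bound: "3 * (qq t)\<^sup>2 \<le> 16 * (Pp t)\<^sup>2"
proof -
  have "16 * (Pp t)\<^sup>2 - 3 * (qq t)\<^sup>2 = (4 * Pp t - 3/2)\<^sup>2 + 27/4"
    unfolding qq_sq by (simp add: power2_eq_square algebra_simps)
  moreover have "(4 * Pp t - 3/2)\<^sup>2 \<ge> 0" by simp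
  ultimately show ?thesis by linarith
qed

lemma r3: "(sqrt 3)\<^sup>2 = (3::real)" "sqrt 3 > (0::real)" by simp_all

lemma key_bound': "sqrt 3 * \<bar>qq t\<bar> \<le> 4 * Pp t"
proof -
  have "(sqrt 3 * \<bar>qq t\<bar>)\<^sup>2 = 3 * (qq t)\<^sup>2" by (simp add: power_mult_distrib)
  also have "\<dots> \<le> (4 * Pp t)\<^sup>2" using key_bound by (simp add: power_mult_distrib)
  finally show ?thesis using Pp_pos[of t]
    by (meson abs_ge_zero mult_nonneg_nonneg less_imp_le real_sqrt_ge_zero power2_le_imp_le mult_pos_pos zero_less_numeral)
qed

lemma R1: "qq t \<ge> 0 \<Longrightarrow> psim t \<ge> -(1 + sqrt 3)/2"
proof -
  assume q: "qq t \<ge> 0"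
  define P where "P = Pp t" define q where "q = qq t" define r where "r = sqrt (3::real)"
  have P: "P > 0" unfolding P_def by (rule Pp_pos)
  have r: "r\<^sup>2 = 3" "r > 0" unfolding r_def by simp_all
  have "SS t \<le> q + r*P"
  proof -
    have "3*P\<^sup>2 + q\<^sup>2 \<le> (q + r*P)\<^sup>2"
    proof -
      have "(q + r*P)\<^sup>2 = q\<^sup>2 + 2*r*q*P + r\<^sup>2*P\<^sup>2" by (simp add: power2_eq_square algebra_simps)
      moreover have "2*r*q*P \<ge> 0" using q r P unfolding q_def by simp
      ultimately show ?thesis using r by simp
    qed
    moreover have "q + r*P \<ge> 0" using q r P unfolding q_def by simp
    ultimately show ?thesis unfolding SS_def P_def[symmetric] q_def[symmetric] by (intro sq_le_sqrt)
  qed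
  then have "q - P - SS t \<ge> -(1+r)*P" by (simp add: algebra_simps)
  then have "(q - P - SS t)/(2*P) \<ge> -(1+r)*P/(2*P)" using P by (intro divide_right_mono) simp_all
  then show ?thesis using P unfolding psim_def P_def[symmetric] q_def[symmetric] r_def[symmetric] by simp
qed

lemma psim_le_iff: "psim t \<le> c \<longleftrightarrow> qq t - Pp t - SS t \<le> 2 * Pp t * c"
  unfolding psim_def using Pp_pos[of t] by (simp add: divide_le_eq mult.commute)
lemma psim_lt_iff: "psim t < c \<longleftrightarrow> qq t - Pp t - SS t < 2 * Pp t * c"
  unfolding psim_def using Pp_pos[of t] by (simp add: divide_less_eq mult.commute)
lemma psim_ge_iff: "c \<le> psim t \<longleftrightarrow> 2 * Pp t * c \<le> qq t - Pp t - SS t"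
  unfolding psim_def using Pp_pos[of t] by (simp add: le_divide_eq mult.commute)
lemma psip_gt_iff: "c < psip t \<longleftrightarrow> 2 * Pp t * c < qq t - Pp t + SS t"
  unfolding psip_def using Pp_pos[of t] by (simp add: less_divide_eq mult.commute)

lemma R2: "psim t \<le> (sqrt 3 - 1)/2"
proof -
  have "qq t \<le> SS t" using SS_gt[of t] by linarith
  moreover have "0 \<le> sqrt 3 * Pp t" using Pp_pos[of t] by simp
  ultimately show ?thesis unfolding psim_le_iff by (simp add: algebra_simps)
qed

lemma R3: "qq t > 0 \<Longrightarrow> psip t > (sqrt 3 - 1)/2"
proof -
  assume q: "qq t > 0"
  define P where "P = Pp t" define q where "q = qq t" define r where "r = sqrt (3::real)"
  have P: "P > 0" unfolding P_def by (rule Pp_pos)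
  have r: "r\<^sup>2 = 3" "r > 0" unfolding r_def by simp_all
  have "r*P - q < SS t"
  proof (cases "r*P - q < 0")
    case True
    moreover have "SS t \<ge> 0" using SS_gt[of t] by linarith
    ultimately show ?thesis by linarith
  next
    case False
    have "(r*P - q)\<^sup>2 = r\<^sup>2*P\<^sup>2 - 2*r*q*P + q\<^sup>2" by (simp add: power2_eq_square algebra_simps)
    moreover have "2*r*q*P > 0" using q r P unfolding q_def by simp
    ultimately have "(r*P - q)\<^sup>2 < 3*P\<^sup>2 + q\<^sup>2" using r by simp
    then show ?thesis unfolding SS_def P_def[symmetric] q_def[symmetric] by (rule sq_lt_sqrt)
  qed
  then show ?thesis unfolding psip_gt_iff P_def[symmetric] q_def[symmetric] r_def[symmetric]
    by (simp add: field_simps)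
qed

lemma R4: "qq t < 0 \<Longrightarrow> psim t < -(1 + sqrt 3)/2"
proof -
  assume q: "qq t < 0"
  define P where "P = Pp t" define q where "q = qq t" define r where "r = sqrt (3::real)"
  have P: "P > 0" unfolding P_def by (rule Pp_pos)
  have r: "r\<^sup>2 = 3" "r > 0" unfolding r_def by simp_all
  have "q + r*P < SS t"
  proof (cases "q + r*P < 0")
    case True
    moreover have "SS t \<ge> 0" using SS_gt[of t] by linarith
    ultimately show ?thesis by linarith
  next
    case False
    have "(q + r*P)\<^sup>2 = q\<^sup>2 + 2*r*q*P + r\<^sup>2*P\<^sup>2" by (simp add: power2_eq_square algebra_simps)
    moreover have "2*r*q*P < 0" using q r P unfolding q_def by (simp add: mult_pos_neg mult_neg_pos)
    ultimately have "(q + r*P)\<^sup>2 < 3*P\<^sup>2 + q\<^sup>2" using r by simp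
    then show ?thesis unfolding SS_def P_def[symmetric] q_def[symmetric] by (rule sq_lt_sqrt)
  qed
  then show ?thesis unfolding psim_lt_iff P_def[symmetric] q_def[symmetric] r_def[symmetric]
    by (simp add: algebra_simps)
qed

lemma R5: "psip t > -(1 + sqrt 3)/2"
proof -
  have "-qq t < SS t" using SS_gt[of t] by linarith
  moreover have "0 \<le> sqrt 3 * Pp t" using Pp_pos[of t] by simp
  ultimately show ?thesis unfolding psip_gt_iff by (simp add: field_simps)
qed

lemma R6a: "psim t \<ge> -(1 + 3 * sqrt 3)/2"
proof -
  define P where "P = Pp t" define q where "q = qq t" define r where "r = sqrt (3::real)"
  have P: "P > 0" unfolding P_def by (rule Pp_pos)
  have r: "r\<^sup>2 = 3" "r > 0" unfolding r_def by simp_all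
  have kb: "r * \<bar>q\<bar> \<le> 4*P" unfolding r_def q_def P_def by (rule key_bound')
  have rq: "-(4*P) \<le> r*q"
  proof (cases "q \<ge> 0")
    case True then have "r*q \<ge> 0" using r by simp
    then show ?thesis using P by linarith
  next
    case False then show ?thesis using kb by simp
  qed
  have "SS t \<le> q + 3*r*P"
  proof -
    have "(q + 3*r*P)\<^sup>2 = q\<^sup>2 + 6*P*(r*q) + 9*r\<^sup>2*P\<^sup>2" by (simp add: power2_eq_square algebra_simps)
    also have "\<dots> \<ge> q\<^sup>2 + 6*P*(-(4*P)) + 27*P\<^sup>2"
    proof -
      have m: "6*P*(-(4*P)) \<le> 6*P*(r*q)" using rq P by (intro mult_left_mono) auto
      show ?thesis using m r by simp
    qed
    finally have "3*P\<^sup>2 + q\<^sup>2 \<le> (q + 3*r*P)\<^sup>2" by (simp add: power2_eq_square algebra_simps)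
    moreover have "0 \<le> q + 3*r*P"
    proof -
      have "r*(q + 3*r*P) = r*q + 9*P" using r by (simp add: algebra_simps power2_eq_square)
      also have "\<dots> \<ge> 0" using rq P by simp
      finally show ?thesis using r by (simp add: zero_le_mult_iff)
    qed
    ultimately show ?thesis unfolding SS_def P_def[symmetric] q_def[symmetric] by (intro sq_le_sqrt)
  qed
  then show ?thesis unfolding psim_ge_iff P_def[symmetric] q_def[symmetric] r_def[symmetric]
    by (simp add: field_simps)
qed

lemma R6b: "psim t \<le> -(1 + sqrt 3 / 3)/2"
proof -
  define P where "P = Pp t" define q where "q = qq t" define r where "r = sqrt (3::real)"
  have P: "P > 0" unfolding P_def by (rule Pp_pos)
  have r: "r\<^sup>2 = 3" "r > 0" unfolding r_def by simp_all
  have kb: "r * \<bar>q\<bar> \<le> 4*P" unfolding r_def q_def P_def by (rule key_bound')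
  have rq: "r*q \<le> 4*P"
  proof (cases "q \<ge> 0")
    case False then have "r*q \<le> 0" using r by (simp add: mult_nonneg_nonpos)
    then show ?thesis using P by linarith
  next
    case True then show ?thesis using kb by simp
  qed
  have "q + r/3*P \<le> SS t"
  proof (cases "q + r/3*P < 0")
    case True
    moreover have "SS t \<ge> 0" using SS_gt[of t] by linarith
    ultimately show ?thesis by linarith
  next
    case False
    have "(q + r/3*P)\<^sup>2 = q\<^sup>2 + 2/3*P*(r*q) + r\<^sup>2/9*P\<^sup>2" by (simp add: power2_eq_square field_simps)
    also have "\<dots> \<le> q\<^sup>2 + 2/3*P*(4*P) + 3/9*P\<^sup>2"
    proof -
      have m: "2/3*P*(r*q) \<le> 2/3*P*(4*P)" using rq P by (intro mult_left_mono) auto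
      show ?thesis using m r by simp
    qed
    finally have "(q + r/3*P)\<^sup>2 \<le> 3*P\<^sup>2 + q\<^sup>2" by (simp add: power2_eq_square algebra_simps)
    then have "sqrt ((q + r/3*P)\<^sup>2) \<le> SS t" unfolding SS_def P_def[symmetric] q_def[symmetric]
      by (rule real_sqrt_le_mono)
    then show ?thesis using False by simp
  qed
  then show ?thesis unfolding psim_le_iff P_def[symmetric] q_def[symmetric] r_def[symmetric]
    by (simp add: algebra_simps)
qed


lemma cos_frac: "cos (2*pi*frac z) = cos (2*pi*z)"
proof -
  have "2*pi*frac z = 2*pi*z - (2*pi) * of_int \<lfloor>z\<rfloor>" unfolding frac_def by (simp add: algebra_simps)
  then show ?thesis by (simp add: cos_diff)
qed

lemma cos_one_minus: "cos (2*pi*(1-y)) = cos (2*pi*y)"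
proof -
  have "2*pi*(1-y) = 2*pi - 2*pi*y" by (simp add: algebra_simps)
  then show ?thesis by (simp add: cos_diff)
qed

lemma L0le:
  assumes u: "0 \<le> u" "u \<le> 1/2" and c: "\<bar>c\<bar> \<le> 1"
  shows "cos (2*pi*u) \<le> c \<longleftrightarrow> arccos c / (2*pi) \<le> u"
proof -
  have th: "0 \<le> 2*pi*u" "2*pi*u \<le> pi" using u by (simp_all add: pi_ge_zero)
  have "cos (2*pi*u) \<le> c \<longleftrightarrow> arccos c \<le> arccos (cos (2*pi*u))"
    using c by (subst arccos_le_mono) auto
  also have "\<dots> \<longleftrightarrow> arccos c \<le> 2*pi*u" using arccos_cos[OF th] by simp
  also have "\<dots> \<longleftrightarrow> arccos c / (2*pi) \<le> u" by (simp add: divide_le_eq mult.commute pi_gt_zero)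
  finally show ?thesis .
qed

lemma L0ge:
  assumes u: "0 \<le> u" "u \<le> 1/2" and c: "\<bar>c\<bar> \<le> 1"
  shows "c \<le> cos (2*pi*u) \<longleftrightarrow> u \<le> arccos c / (2*pi)"
proof -
  have th: "0 \<le> 2*pi*u" "2*pi*u \<le> pi" using u by (simp_all add: pi_ge_zero)
  have "c \<le> cos (2*pi*u) \<longleftrightarrow> arccos (cos (2*pi*u)) \<le> arccos c"
    using c by (subst arccos_le_mono) auto
  also have "\<dots> \<longleftrightarrow> 2*pi*u \<le> arccos c" using arccos_cos[OF th] by simp
  also have "\<dots> \<longleftrightarrow> u \<le> arccos c / (2*pi)" by (simp add: le_divide_eq mult.commute pi_gt_zero)
  finally show ?thesis .
qed

lemma acos_range: "\<bar>c\<bar> \<le> 1 \<Longrightarrow> 0 \<le> arccos c / (2*pi) \<and> arccos c / (2*pi) \<le> 1/2"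
  using arccos_bounded[of c] by (auto simp: divide_le_eq pi_gt_zero)

lemma Lle:
  assumes y: "0 \<le> y" "y < 1" and c: "\<bar>c\<bar> \<le> 1"
  shows "cos (2*pi*y) \<le> c \<longleftrightarrow> arccos c / (2*pi) \<le> y \<and> y \<le> 1 - arccos c / (2*pi)"
proof (cases "y \<le> 1/2")
  case True
  then show ?thesis using L0le[OF y(1) True c] acos_range[OF c] by auto
next
  case False
  have "cos (2*pi*y) \<le> c \<longleftrightarrow> cos (2*pi*(1-y)) \<le> c" by (simp add: cos_one_minus)
  also have "\<dots> \<longleftrightarrow> arccos c / (2*pi) \<le> 1-y" using False y by (intro L0le c) auto
  finally show ?thesis using False acos_range[OF c] by auto
qed

lemma Lge:
  assumes y: "0 \<le> y" "y < 1" and c: "\<bar>c\<bar> \<le> 1"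
  shows "c \<le> cos (2*pi*y) \<longleftrightarrow> y \<le> arccos c / (2*pi) \<or> 1 - arccos c / (2*pi) \<le> y"
proof (cases "y \<le> 1/2")
  case True
  have "1 - arccos c / (2*pi) \<le> y \<Longrightarrow> y \<le> arccos c / (2*pi)" using True acos_range[OF c] by auto
  then show ?thesis using L0ge[OF y(1) True c] by auto
next
  case False
  have "c \<le> cos (2*pi*y) \<longleftrightarrow> c \<le> cos (2*pi*(1-y))" by (simp add: cos_one_minus)
  also have "\<dots> \<longleftrightarrow> 1-y \<le> arccos c / (2*pi)" using False y by (intro L0ge c) auto
  finally show ?thesis using False acos_range[OF c] by auto
qed

lemma Lbetween:
  assumes y: "0 \<le> y" "y < 1" and c: "\<bar>c1\<bar> \<le> 1" "\<bar>c2\<bar> \<le> 1" "c1 \<le> c2"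
  shows "(c1 \<le> cos (2*pi*y) \<and> cos (2*pi*y) \<le> c2) \<longleftrightarrow>
     y \<in> {arccos c2 / (2*pi) .. arccos c1 / (2*pi)} \<union> {1 - arccos c1 / (2*pi) .. 1 - arccos c2 / (2*pi)}"
proof -
  have mono: "arccos c1 / (2*pi) \<ge> arccos c2 / (2*pi)"
    using c arccos_le_mono[of c2 c1] by (simp add: divide_right_mono pi_ge_zero)
  define a1 where "a1 = arccos c1 / (2*pi)"
  define a2 where "a2 = arccos c2 / (2*pi)"
  have r: "0 \<le> a1" "a1 \<le> 1/2" "0 \<le> a2" "a2 \<le> 1/2" "a2 \<le> a1"
    using acos_range[OF c(1)] acos_range[OF c(2)] mono unfolding a1_def a2_def by auto
  show ?thesis unfolding Lle[OF y c(2)] Lge[OF y c(1)] a1_def[symmetric] a2_def[symmetric]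
    using r by auto
qed


lemma conv_le: "k > 0 \<Longrightarrow> psi_c k y \<le> v \<longleftrightarrow> cos (2*pi*y) \<le> v / (2*pi*k)"
  unfolding psi_c_def by (simp add: le_divide_eq pi_gt_zero mult.commute mult.left_commute)
lemma conv_ge: "k > 0 \<Longrightarrow> v \<le> psi_c k y \<longleftrightarrow> v / (2*pi*k) \<le> cos (2*pi*y)"
  unfolding psi_c_def by (simp add: divide_le_eq pi_gt_zero mult.commute mult.left_commute)
lemma conv_eq: "k > 0 \<Longrightarrow> psi_c k y = v \<longleftrightarrow> cos (2*pi*y) = v / (2*pi*k)"
  unfolding psi_c_def by (auto simp: field_simps)
lemma four: "k > 0 \<Longrightarrow> -(a)/(4*pi*k) = (-a/2)/(2*pi*k)"
  by (simp add: field_simps)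

lemma sqrt3_lt2: "sqrt 3 < (2::real)"
  by (rule real_less_lsqrt) auto

lemma cbound: "k \<ge> 1 \<Longrightarrow> \<bar>a\<bar> \<le> 12 \<Longrightarrow> \<bar>-(a)/(4*pi*k)\<bar> \<le> 1"
proof -
  assume k: "k \<ge> 1" and a: "\<bar>a\<bar> \<le> 12"
  have "4*pi*1 \<le> 4*pi*k" using k by (intro mult_left_mono) (auto simp: pi_ge_zero)
  then have k12: "4*pi*k \<ge> 12" using pi_gt3 by linarith
  have d: "4*pi*k > 0" using k12 by linarith
  have "\<bar>-(a)/(4*pi*k)\<bar> = \<bar>a\<bar>/(4*pi*k)" using d by (simp add: abs_divide)
  also have "\<dots> \<le> 1" using a k12 d by (simp add: divide_le_eq_1_pos)
  finally show ?thesis .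
qed

lemma delta_part:
  assumes k: "k \<ge> 1"
  shows "tangency_set k \<subseteq> Delta_hat_T k"
proof
  fix z assume z: "z \<in> tangency_set k"
  obtain x y where zxy: "z = (x,y)" by (cases z)
  have rep: "0 \<le> y" "y < 1" using z zxy unfolding tangency_set_def torus_rep_def by auto
  have "\<exists>L. e_plus k (x,y) L \<and> e_minus k (x,y) L" using z zxy unfolding tangency_set_def by auto
  then have eq: "psi_c k y = psim (psi_c k (y - x))" by (simp add: tangency_iff)
  have kp: "k > 0" using k by simp
  define c1 where "c1 = -(1 + 3 * sqrt 3)/(4*pi*k)"
  define c2 where "c2 = -(1 + sqrt 3 / 3)/(4*pi*k)"
  have s3: "0 \<le> sqrt (3::real)" "sqrt (3::real) < 2" using sqrt3_lt2 by simp_all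
  have c1b: "\<bar>c1\<bar> \<le> 1" unfolding c1_def by (rule cbound[OF k]) (unfold abs_le_iff, use s3 in linarith)
  have c2b: "\<bar>c2\<bar> \<le> 1" unfolding c2_def by (rule cbound[OF k]) (unfold abs_le_iff, use s3 in linarith)
  have c12: "c1 \<le> c2" unfolding c1_def c2_def using s3 kp
    by (intro divide_right_mono) (auto simp: pi_gt_zero)
  have "c1 \<le> cos (2*pi*y)" unfolding c1_def four[OF kp] using R6a eq conv_ge[OF kp] by metis
  moreover have "cos (2*pi*y) \<le> c2" unfolding c2_def four[OF kp] using R6b eq conv_le[OF kp] by metis
  ultimately have "y \<in> {arccos c2 / (2*pi) .. arccos c1 / (2*pi)} \<union> {1 - arccos c1 / (2*pi) .. 1 - arccos c2 / (2*pi)}"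
    using Lbetween[OF rep c1b c2b c12] by simp
  then show "z \<in> Delta_hat_T k" unfolding Delta_hat_T_def zxy delta_hat_T_minus_def delta_hat_T_plus_def c1_def c2_def
    by simp
qed


lemma phi_vals:
  fixes t v :: real
  assumes q0: "qq t \<noteq> 0"
  defines "ph \<equiv> - 2 * (t\<^sup>2 + t + 1) / (1 + 2 * t)"
  shows "(v = (- (ph + 2) + sqrt (3 * ph\<^sup>2 + 4)) / (2 * ph) \<or>
          v = (- (ph + 2) - sqrt (3 * ph\<^sup>2 + 4)) / (2 * ph)) \<longleftrightarrow> (v = psim t \<or> v = psip t)"
proof -
  define P where "P = Pp t" define q where "q = qq t" define S where "S = SS t"
  have P: "P > 0" unfolding P_def by (rule Pp_pos)
  have q: "q \<noteq> 0" using q0 unfolding q_def .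
  have S2: "S\<^sup>2 = 3*P\<^sup>2 + q\<^sup>2" unfolding S_def P_def q_def by (rule SS_sq)
  have S0: "S \<ge> 0" unfolding S_def SS_def by simp
  have phd: "ph = -2*P/q" unfolding ph_def P_def q_def Pp_def qq_def by simp
  have arg: "3 * ph\<^sup>2 + 4 = (2*S/q)\<^sup>2"
    unfolding phd using q S2 by (simp add: power_divide field_simps power2_eq_square)
  have sq: "sqrt (3 * ph\<^sup>2 + 4) = \<bar>2*S/q\<bar>" unfolding arg by simp
  have v1: "(- (ph + 2) + 2*S/q) / (2 * ph) = psim t"
    unfolding psim_def P_def[symmetric] q_def[symmetric] S_def[symmetric] phd using q P
    by (simp add: field_simps)
  have v2: "(- (ph + 2) - 2*S/q) / (2 * ph) = psip t"
    unfolding psip_def P_def[symmetric] q_def[symmetric] S_def[symmetric] phd using q P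
    by (simp add: field_simps)
  show ?thesis
  proof (cases "q > 0")
    case True
    then have "\<bar>2*S/q\<bar> = 2*S/q" using S0 by simp
    then show ?thesis unfolding sq using v1 v2 by auto
  next
    case False
    then have "q < 0" using q by simp
    then have "2*S/q \<le> 0" using S0 by (simp add: divide_nonneg_neg)
    then have "\<bar>2*S/q\<bar> = -(2*S/q)" by (simp only: abs_of_nonpos)
    then show ?thesis unfolding sq using v1 v2 by auto
  qed
qed


lemma sel1: "lo \<le> m \<Longrightarrow> m \<le> hi \<Longrightarrow> hi < p \<Longrightarrow> ((a = m \<or> a = p) \<and> (lo \<le> a \<and> a \<le> (hi::real))) \<longleftrightarrow> a = m"
  by auto
lemma sel2: "m < hi \<Longrightarrow> hi < p \<Longrightarrow> ((a = m \<or> a = p) \<and> a \<le> (hi::real)) \<longleftrightarrow> a = m"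
  by auto

lemma gamma_part:
  assumes k: "k \<ge> 1" and rep: "(x, y) \<in> torus_rep"
    and ns: "frac (y - x) \<notin> {delta_star k, 1 - delta_star k}"
  shows "(x, y) \<in> tangency_set k \<longleftrightarrow> y \<in> Gamma_set k (frac (y - x))"
proof -
  have kp: "k > 0" using k by simp
  define yt where "yt = frac (y - x)"
  define t where "t = psi_c k yt"
  have yt: "0 \<le> yt" "yt < 1" unfolding yt_def by (simp_all add: frac_lt_1)
  have y: "0 \<le> y" "y < 1" using rep unfolding torus_rep_def by auto
  have tt: "psi_c k (y - x) = t" unfolding t_def yt_def psi_c_def cos_frac by simp
  have tang: "(x, y) \<in> tangency_set k \<longleftrightarrow> psi_c k y = psim t"
    using rep tangency_iff[of k x y] unfolding tangency_set_def tt by auto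
  have s3: "0 \<le> sqrt (3::real)" "sqrt (3::real) < 2" using sqrt3_lt2 by simp_all
  define cs where "cs = - 1 / (4*pi*k)"
  have csb: "\<bar>cs\<bar> \<le> 1" unfolding cs_def by (rule cbound[OF k]) simp
  have ds: "delta_star k = arccos cs / (2*pi)" unfolding delta_star_def cs_def ..
  have qge: "qq t \<ge> 0 \<longleftrightarrow> yt \<le> delta_star k \<or> 1 - delta_star k \<le> yt"
  proof -
    have "qq t \<ge> 0 \<longleftrightarrow> -(1)/2 \<le> psi_c k yt" unfolding qq_def t_def by auto
    also have "\<dots> \<longleftrightarrow> cs \<le> cos (2*pi*yt)" unfolding conv_ge[OF kp] cs_def four[OF kp] ..
    finally show ?thesis unfolding ds Lge[OF yt csb] .
  qed
  have qle: "qq t \<le> 0 \<longleftrightarrow> delta_star k \<le> yt \<and> yt \<le> 1 - delta_star k"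
  proof -
    have "qq t \<le> 0 \<longleftrightarrow> psi_c k yt \<le> -(1)/2" unfolding qq_def t_def by auto
    also have "\<dots> \<longleftrightarrow> cos (2*pi*yt) \<le> cs" unfolding conv_le[OF kp] cs_def four[OF kp] ..
    finally show ?thesis unfolding ds Lle[OF yt csb] .
  qed
  have q0: "qq t \<noteq> 0"
  proof
    assume "qq t = 0"
    then have "yt = delta_star k \<or> yt = 1 - delta_star k" using qge qle by auto
    then show False using ns unfolding yt_def by auto
  qed
  have near: "yt \<in> {0..delta_star k} \<union> {1 - delta_star k..1} \<longleftrightarrow> qq t > 0"
    using qge q0 yt by auto
  have phi: "y \<in> Phi_set k yt \<longleftrightarrow> (psi_c k y = psim t \<or> psi_c k y = psip t)"
  proof -
    have "phi_t k yt = - 2 * (t\<^sup>2 + t + 1) / (1 + 2 * t)" unfolding phi_t_def t_def ..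
    then have "y \<in> Phi_set k yt \<longleftrightarrow> (psi_c k y = (- ((- 2 * (t\<^sup>2 + t + 1) / (1 + 2 * t)) + 2) + sqrt (3 * (- 2 * (t\<^sup>2 + t + 1) / (1 + 2 * t))\<^sup>2 + 4)) / (2 * (- 2 * (t\<^sup>2 + t + 1) / (1 + 2 * t))) \<or>
          psi_c k y = (- ((- 2 * (t\<^sup>2 + t + 1) / (1 + 2 * t)) + 2) - sqrt (3 * (- 2 * (t\<^sup>2 + t + 1) / (1 + 2 * t))\<^sup>2 + 4)) / (2 * (- 2 * (t\<^sup>2 + t + 1) / (1 + 2 * t))))"
      unfolding Phi_set_def Let_def psi_c_def using y by simp
    then show ?thesis using phi_vals[OF q0, of "psi_c k y"] by simp
  qed
  define c1 where "c1 = -(1 + sqrt 3)/(4*pi*k)"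
  define c2 where "c2 = -(1 - sqrt 3)/(4*pi*k)"
  have c1b: "\<bar>c1\<bar> \<le> 1" unfolding c1_def by (rule cbound[OF k]) (unfold abs_le_iff, use s3 in linarith)
  have c2b: "\<bar>c2\<bar> \<le> 1" unfolding c2_def by (rule cbound[OF k]) (unfold abs_le_iff, use s3 in linarith)
  have c12: "c1 \<le> c2" unfolding c1_def c2_def using s3 kp
    by (intro divide_right_mono) (auto simp: pi_gt_zero)
  have dp: "delta_plus k = arccos c1 / (2*pi)" unfolding delta_plus_def c1_def ..
  have dm: "delta_minus k = arccos c2 / (2*pi)" unfolding delta_minus_def c2_def ..
  have c1c: "c1 \<le> cos (2*pi*y) \<longleftrightarrow> -(1 + sqrt 3)/2 \<le> psi_c k y"
    unfolding c1_def four[OF kp] conv_ge[OF kp] ..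
  have c1c': "cos (2*pi*y) \<le> c1 \<longleftrightarrow> psi_c k y \<le> -(1 + sqrt 3)/2"
    unfolding c1_def four[OF kp] conv_le[OF kp] ..
  have c2c: "cos (2*pi*y) \<le> c2 \<longleftrightarrow> psi_c k y \<le> (sqrt 3 - 1)/2"
  proof -
    have "-(1 - sqrt 3)/2 = (sqrt 3 - 1)/(2::real)" by simp
    then show ?thesis unfolding c2_def four[OF kp] conv_le[OF kp] by metis
  qed
  show ?thesis
  proof (cases "qq t > 0")
    case True
    have G: "Gamma_set k yt = Phi_set k yt \<inter> ({delta_minus k..delta_plus k} \<union> {1 - delta_plus k..1 - delta_minus k})"
    proof -
      have "yt \<in> {0..delta_star k} \<union> {1 - delta_star k..1}" using near True by blast
      then show ?thesis unfolding Gamma_set_def by (simp only: if_True)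
    qed
    have "y \<in> Gamma_set k yt \<longleftrightarrow> (psi_c k y = psim t \<or> psi_c k y = psip t) \<and>
           (-(1 + sqrt 3)/2 \<le> psi_c k y \<and> psi_c k y \<le> (sqrt 3 - 1)/2)"
      unfolding G Int_iff phi dp dm Lbetween[OF y c1b c2b c12, symmetric] c1c c2c ..
    also have "\<dots> \<longleftrightarrow> psi_c k y = psim t"
      by (rule sel1[OF R1[of t] R2[of t] R3[of t]]) (use True in simp_all)
    finally show ?thesis unfolding tang yt_def by (rule sym)
  next
    case False
    then have qn: "qq t < 0" using q0 by simp
    have G: "Gamma_set k yt = Phi_set k yt \<inter> {delta_plus k..1 - delta_plus k}"
    proof -
      have "yt \<notin> {0..delta_star k} \<union> {1 - delta_star k..1}" using near False by blast
      then show ?thesis unfolding Gamma_set_def by (simp only: if_False)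
    qed
    have "y \<in> Gamma_set k yt \<longleftrightarrow> (psi_c k y = psim t \<or> psi_c k y = psip t) \<and>
           psi_c k y \<le> -(1 + sqrt 3)/2"
      unfolding G Int_iff phi dp c1c'[symmetric] Lle[OF y c1b] by simp
    also have "\<dots> \<longleftrightarrow> psi_c k y = psim t"
      by (rule sel2[OF R4[OF qn] R5[of t]])
    finally show ?thesis unfolding tang yt_def by (rule sym)
  qed
qed


lemma re_vderiv:
  assumes H: "H holomorphic_on U" and U: "open U" and s: "complex_of_real s \<in> U"
  shows "((\<lambda>s. Re (H (of_real s))) has_vector_derivative Re (deriv H (of_real s))) (at s)"
proof -
  have "(H has_field_derivative deriv H (of_real s)) (at (of_real s))"
    by (rule holomorphic_derivI[OF H U s])
  then have "((\<lambda>x. H (of_real x)) has_vector_derivative deriv H (of_real s)) (at s)"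
    by (rule has_vector_derivative_real_field)
  then have "((\<lambda>x. Re (H (of_real x))) has_field_derivative Re (deriv H (of_real s))) (at s)"
    by (rule has_field_derivative_Re)
  then show ?thesis by (simp add: has_real_derivative_iff_has_vector_derivative)
qed

lemma GL:
  fixes F1 F2 :: "complex \<Rightarrow> complex"
  assumes H1: "F1 holomorphic_on U" and H2: "F2 holomorphic_on U" and U: "open U"
    and R: "\<And>s. complex_of_real s \<in> U"
  shows "nth_vderiv n (\<lambda>s. (Re (F1 (of_real s)), Re (F2 (of_real s)))) =
         (\<lambda>s. (Re ((deriv^^n) F1 (of_real s)), Re ((deriv^^n) F2 (of_real s))))"
proof (induction n)
  case 0
  then show ?case by simp
next
  case (Suc n)
  have h1: "(deriv^^n) F1 holomorphic_on U" using H1 U by (rule holomorphic_higher_deriv)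
  have h2: "(deriv^^n) F2 holomorphic_on U" using H2 U by (rule holomorphic_higher_deriv)
  show ?case
  proof
    fix s
    have "((\<lambda>s. (Re ((deriv^^n) F1 (of_real s)), Re ((deriv^^n) F2 (of_real s)))) has_vector_derivative
           (Re ((deriv^^(Suc n)) F1 (of_real s)), Re ((deriv^^(Suc n)) F2 (of_real s)))) (at s)"
      using re_vderiv[OF h1 U R[of s]] re_vderiv[OF h2 U R[of s]]
      by (simp add: has_vector_derivative_Pair)
    then show "nth_vderiv (Suc n) (\<lambda>s. (Re (F1 (of_real s)), Re (F2 (of_real s)))) s =
         (Re ((deriv^^(Suc n)) F1 (of_real s)), Re ((deriv^^(Suc n)) F2 (of_real s)))"
      using Suc.IH by (simp add: vector_derivative_at)
  qed
qed

lemma GL_diff: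
  fixes F1 F2 :: "complex \<Rightarrow> complex"
  assumes H1: "F1 holomorphic_on U" and H2: "F2 holomorphic_on U" and U: "open U"
    and R: "\<And>s. complex_of_real s \<in> U"
  shows "nth_vderiv n (\<lambda>s. (Re (F1 (of_real s)), Re (F2 (of_real s)))) differentiable (at t)"
proof -
  have h1: "(deriv^^n) F1 holomorphic_on U" using H1 U by (rule holomorphic_higher_deriv)
  have h2: "(deriv^^n) F2 holomorphic_on U" using H2 U by (rule holomorphic_higher_deriv)
  have "((\<lambda>s. (Re ((deriv^^n) F1 (of_real s)), Re ((deriv^^n) F2 (of_real s)))) has_vector_derivative
           (Re ((deriv^^(Suc n)) F1 (of_real t)), Re ((deriv^^(Suc n)) F2 (of_real t)))) (at t)"
    using re_vderiv[OF h1 U R[of t]] re_vderiv[OF h2 U R[of t]]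
    by (simp add: has_vector_derivative_Pair)
  then show ?thesis unfolding GL[OF H1 H2 U R] using differentiableI_vector by blast
qed

lemma GL_first:
  fixes F1 F2 :: "complex \<Rightarrow> complex"
  assumes H1: "F1 holomorphic_on U" and H2: "F2 holomorphic_on U" and U: "open U"
    and R: "\<And>s. complex_of_real s \<in> U"
  shows "vector_derivative (\<lambda>s. (Re (F1 (of_real s)), Re (F2 (of_real s)))) (at t) =
     (Re (deriv F1 (of_real t)), Re (deriv F2 (of_real t)))"
proof -
  have "nth_vderiv (Suc 0) (\<lambda>s. (Re (F1 (of_real s)), Re (F2 (of_real s)))) t =
         (Re ((deriv^^(Suc 0)) F1 (of_real t)), Re ((deriv^^(Suc 0)) F2 (of_real t)))"
    unfolding GL[OF H1 H2 U R] ..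
  then show ?thesis by simp
qed


definition Tc :: "real \<Rightarrow> complex \<Rightarrow> complex" where
  "Tc k z = of_real (2*pi*k) * cos (2 * of_real pi * z)"
definition Pc :: "complex \<Rightarrow> complex" where "Pc w = w\<^sup>2 + w + 1"
definition Dc :: "complex \<Rightarrow> complex" where "Dc w = 3 * (Pc w)\<^sup>2 + (1 + 2*w)\<^sup>2"
definition Mc :: "complex \<Rightarrow> complex" where
  "Mc w = ((1 + 2*w) - Pc w - csqrt (Dc w)) / (2 * Pc w)"
definition Wc :: "real \<Rightarrow> complex \<Rightarrow> complex" where
  "Wc k z = Mc (Tc k z) / of_real (2*pi*k)"
definition Yc :: "real \<Rightarrow> complex \<Rightarrow> complex" where
  "Yc k z = Arccos (Wc k z) / (2 * of_real pi)"
definition U1 :: "real \<Rightarrow> complex set" where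
  "U1 k = {z. 0 < Re (Dc (Tc k z))} \<inter> {z. Pc (Tc k z) \<noteq> 0}"
definition UU :: "real \<Rightarrow> complex set" where
  "UU k = U1 k \<inter> Wc k -` {w. \<bar>Re w\<bar> < 1}"

definition Wr :: "real \<Rightarrow> real \<Rightarrow> real" where "Wr k s = psim (psi_c k s) / (2*pi*k)"
definition Yr :: "real \<Rightarrow> real \<Rightarrow> real" where "Yr k s = arccos (Wr k s) / (2*pi)"

lemma Tc_holo: "Tc k holomorphic_on A"
  unfolding Tc_def by (intro holomorphic_intros)

lemma Mc_Tc_holo: "(\<lambda>z. Mc (Tc k z)) holomorphic_on U1 k"
proof -
  have nz: "\<And>z. z \<in> U1 k \<Longrightarrow> Dc (Tc k z) \<notin> \<real>\<^sub>\<le>\<^sub>0"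
    unfolding U1_def by (auto simp: complex_nonpos_Reals_iff)
  have nz2: "\<And>z. z \<in> U1 k \<Longrightarrow> 2 * Pc (Tc k z) \<noteq> 0" unfolding U1_def by auto
  show ?thesis unfolding Mc_def
    by (intro holomorphic_intros nz nz2) (auto simp: Dc_def Pc_def intro!: holomorphic_intros Tc_holo)
qed

lemma Wc_holo: "Wc k holomorphic_on U1 k"
  unfolding Wc_def by (intro holomorphic_intros Mc_Tc_holo) simp

lemma U1_open: "open (U1 k)"
proof -
  have c1: "continuous_on UNIV (\<lambda>z. Re (Dc (Tc k z)))"
    unfolding Dc_def Pc_def Tc_def by (intro continuous_intros)
  have c2: "continuous_on UNIV (\<lambda>z. Pc (Tc k z))"
    unfolding Pc_def Tc_def by (intro continuous_intros)
  show ?thesis unfolding U1_def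
    by (intro open_Int open_Collect_less open_Collect_neq c1 c2 continuous_intros)
qed

lemma UU_open: "open (UU k)"
  unfolding UU_def
  by (intro continuous_open_preimage U1_open holomorphic_on_imp_continuous_on Wc_holo
      open_Collect_less continuous_intros)

lemma Yc_holo: "Yc k holomorphic_on UU k"
proof -
  have "Wc k holomorphic_on UU k" using Wc_holo by (rule holomorphic_on_subset) (auto simp: UU_def)
  moreover have "Arccos holomorphic_on (Wc k ` UU k)"
    by (rule holomorphic_on_Arccos) (auto simp: UU_def)
  ultimately have "(Arccos \<circ> Wc k) holomorphic_on UU k" by (rule holomorphic_on_compose)
  then show ?thesis unfolding Yc_def o_def by (intro holomorphic_intros) simp_all
qed


lemma Tc_real: "Tc k (of_real s) = of_real (psi_c k s)"
  unfolding Tc_def psi_c_def by (simp add: cos_of_real[symmetric])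

lemma Pc_real: "Pc (of_real r) = of_real (Pp r)"
  unfolding Pc_def Pp_def by simp

lemma Dc_real: "Dc (of_real r) = of_real (3*(Pp r)\<^sup>2 + (qq r)\<^sup>2)"
  unfolding Dc_def Pc_real qq_def by simp

lemma Mc_real: "Mc (of_real r) = of_real (psim r)"
proof -
  have "csqrt (Dc (of_real r)) = of_real (SS r)"
    unfolding Dc_real SS_def by (subst csqrt_of_real_nonneg) auto
  then show ?thesis unfolding Mc_def psim_def Pc_real qq_def by simp
qed

lemma Wc_real: "Wc k (of_real s) = of_real (Wr k s)"
  unfolding Wc_def Wr_def Tc_real Mc_real by simp

lemma Wr_bounds: assumes k: "k \<ge> 1" shows "-1 < Wr k s" "Wr k s < 0"
proof -
  have s3: "0 \<le> sqrt (3::real)" "sqrt (3::real) < 2" using sqrt3_lt2 by simp_all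
  have "2*pi*1 \<le> 2*pi*k" using k by (intro mult_left_mono) (auto simp: pi_ge_zero)
  then have K: "2*pi*k > 6" using pi_gt3 by linarith
  have lo: "psim (psi_c k s) \<ge> -(1 + 3 * sqrt 3)/2" by (rule R6a)
  have hi: "psim (psi_c k s) \<le> -(1 + sqrt 3 / 3)/2" by (rule R6b)
  have "1 + 3 * sqrt 3 < (8::real)" using s3 by linarith
  then have "-(1 + 3 * sqrt 3)/2 > (-4::real)" by (simp add: field_simps)
  then have "psim (psi_c k s) > -(2*pi*k)" using lo K by linarith
  then show "-1 < Wr k s" unfolding Wr_def using K by (simp add: less_divide_eq)
  have "0 < 1 + sqrt 3/(3::real)" using s3 by (simp add: add_pos_nonneg)
  then have "-(1 + sqrt 3/3)/2 < (0::real)" by simp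
  then have "psim (psi_c k s) < 0" using hi by linarith
  then show "Wr k s < 0" unfolding Wr_def using K by (simp add: divide_neg_pos)
qed

lemma real_in_UU: assumes k: "k \<ge> 1" shows "complex_of_real s \<in> UU k"
proof -
  have "0 < 3*(Pp (psi_c k s))\<^sup>2 + (qq (psi_c k s))\<^sup>2" using Pp_pos[of "psi_c k s"]
    by (simp add: add_pos_nonneg)
  moreover have "Pp (psi_c k s) \<noteq> 0" using Pp_pos[of "psi_c k s"] by simp
  moreover have "\<bar>Wr k s\<bar> < 1" using Wr_bounds[OF k, of s] by simp
  ultimately show ?thesis
    unfolding UU_def U1_def by (simp add: Tc_real Dc_real Pc_real Wc_real)
qed

lemma Yc_real: assumes k: "k \<ge> 1" shows "Yc k (of_real s) = of_real (Yr k s)"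
proof -
  have "\<bar>Wr k s\<bar> \<le> 1" using Wr_bounds[OF k, of s] by simp
  then have "Arccos (of_real (Wr k s)) = of_real (arccos (Wr k s))" by (simp add: of_real_arccos)
  then show ?thesis unfolding Yc_def Yr_def Wc_real by simp
qed

lemma Yr_bounds: assumes k: "k \<ge> 1" shows "0 < Yr k s" "Yr k s < 1/2"
proof -
  note W = Wr_bounds[OF k, of s]
  have "arccos 1 < arccos (Wr k s)" using W by (subst arccos_less_mono) auto
  then show "0 < Yr k s" unfolding Yr_def by (simp add: pi_gt_zero)
  have "arccos (Wr k s) < arccos (-1)" using W by (subst arccos_less_mono) auto
  then show "Yr k s < 1/2" unfolding Yr_def by (simp add: divide_less_eq pi_gt_zero)
qed

lemma cos_Yr: assumes k: "k \<ge> 1" shows "psi_c k (Yr k s) = psim (psi_c k s)"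
proof -
  have "\<bar>Wr k s\<bar> \<le> 1" using Wr_bounds[OF k, of s] by simp
  then have "cos (2*pi*Yr k s) = Wr k s" unfolding Yr_def by simp
  then show ?thesis using k unfolding psi_c_def Wr_def by (simp add: pi_gt_zero)
qed


definition g1 :: "real \<Rightarrow> real \<Rightarrow> real \<times> real" where
  "g1 k = (\<lambda>s. (Re ((\<lambda>z. Yc k z - z) (of_real s)), Re (Yc k (of_real s))))"
definition g2 :: "real \<Rightarrow> real \<Rightarrow> real \<times> real" where
  "g2 k = (\<lambda>s. (Re ((\<lambda>z. 1 - Yc k z - z) (of_real s)), Re ((\<lambda>z. 1 - Yc k z) (of_real s))))"

lemma g1_val: "k \<ge> 1 \<Longrightarrow> g1 k s = (Yr k s - s, Yr k s)"
  unfolding g1_def by (simp add: Yc_real)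
lemma g2_val: "k \<ge> 1 \<Longrightarrow> g2 k s = (1 - Yr k s - s, 1 - Yr k s)"
  unfolding g2_def by (simp add: Yc_real)

lemma Yr_vderiv: assumes k: "k \<ge> 1"
  shows "((\<lambda>s. Yr k s) has_vector_derivative Re (deriv (Yc k) (of_real t))) (at t)"
proof -
  have "((\<lambda>s. Re (Yc k (of_real s))) has_vector_derivative Re (deriv (Yc k) (of_real t))) (at t)"
    by (rule re_vderiv[OF Yc_holo UU_open real_in_UU[OF k]])
  then show ?thesis using k by (simp add: Yc_real)
qed

lemma g1_smooth: assumes k: "k \<ge> 1" shows "smooth_regular_curve (g1 k)"
  unfolding smooth_regular_curve_def
proof (intro conjI allI)
  fix n t
  have h1: "(\<lambda>z. Yc k z - z) holomorphic_on UU k" by (intro holomorphic_intros Yc_holo)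
  show "nth_vderiv n (g1 k) differentiable (at t)"
    unfolding g1_def by (rule GL_diff[OF h1 Yc_holo UU_open real_in_UU[OF k]])
next
  fix t
  define d where "d = Re (deriv (Yc k) (of_real t))"
  have "g1 k = (\<lambda>s. (Yr k s - s, Yr k s))" using g1_val[OF k] by auto
  moreover have "((\<lambda>s. (Yr k s - s, Yr k s)) has_vector_derivative (d - 1, d)) (at t)"
    using Yr_vderiv[OF k, of t] unfolding d_def
    by (intro has_vector_derivative_Pair has_vector_derivative_diff has_vector_derivative_id)
  ultimately have "vector_derivative (g1 k) (at t) = (d - 1, d)" by (simp add: vector_derivative_at)
  then show "vector_derivative (g1 k) (at t) \<noteq> 0" by (simp add: zero_prod_def)
qed

lemma g2_smooth: assumes k: "k \<ge> 1" shows "smooth_regular_curve (g2 k)"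
  unfolding smooth_regular_curve_def
proof (intro conjI allI)
  fix n t
  have h1: "(\<lambda>z. 1 - Yc k z - z) holomorphic_on UU k" by (intro holomorphic_intros Yc_holo)
  have h2: "(\<lambda>z. 1 - Yc k z) holomorphic_on UU k" by (intro holomorphic_intros Yc_holo)
  show "nth_vderiv n (g2 k) differentiable (at t)"
    unfolding g2_def by (rule GL_diff[OF h1 h2 UU_open real_in_UU[OF k]])
next
  fix t
  define d where "d = Re (deriv (Yc k) (of_real t))"
  have "g2 k = (\<lambda>s. (1 - Yr k s - s, 1 - Yr k s))" using g2_val[OF k] by auto
  moreover have "((\<lambda>s. (1 - Yr k s - s, 1 - Yr k s)) has_vector_derivative (0 - d - 1, 0 - d)) (at t)"
    using Yr_vderiv[OF k, of t] unfolding d_def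
    by (intro has_vector_derivative_Pair has_vector_derivative_diff has_vector_derivative_id
        has_vector_derivative_const)
  ultimately have "vector_derivative (g2 k) (at t) = (0 - d - 1, 0 - d)" by (simp add: vector_derivative_at)
  then show "vector_derivative (g2 k) (at t) \<noteq> 0" by (simp add: zero_prod_def)
qed

lemma psi_shift: "psi_c k (a - frac (a - s)) = psi_c k s"
proof -
  have "2*pi*(a - frac (a - s)) = 2*pi * s + (2*pi) * of_int \<lfloor>a - s\<rfloor>"
    unfolding frac_def by (simp add: algebra_simps)
  then show ?thesis unfolding psi_c_def by (simp add: cos_add)
qed

lemma psi_one_minus: "psi_c k (1 - y) = psi_c k y"
  unfolding psi_c_def cos_one_minus ..

lemma curves_union: assumes k: "k \<ge> 1"
  shows "tangency_set k = torus_proj ` range (g1 k) \<union> torus_proj ` range (g2 k)"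
proof
  show "tangency_set k \<subseteq> torus_proj ` range (g1 k) \<union> torus_proj ` range (g2 k)"
  proof
    fix z assume z: "z \<in> tangency_set k"
    obtain x y where zxy: "z = (x,y)" by (cases z)
    have rep: "0 \<le> x" "x < 1" "0 \<le> y" "y < 1" using z zxy unfolding tangency_set_def torus_rep_def by auto
    have "\<exists>L. e_plus k (x,y) L \<and> e_minus k (x,y) L" using z zxy unfolding tangency_set_def by auto
    then have eq: "psi_c k y = psim (psi_c k (y - x))" by (simp add: tangency_iff)
    define s where "s = y - x"
    have kp: "k > 0" using k by simp
    have cw: "cos (2*pi*y) = Wr k s" using eq kp unfolding psi_c_def Wr_def s_def by (simp add: field_simps)
    have tp: "torus_proj (x,y) = (x,y)" unfolding torus_proj_def using rep by (simp add: frac_eq)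
    show "z \<in> torus_proj ` range (g1 k) \<union> torus_proj ` range (g2 k)"
    proof (cases "y \<le> 1/2")
      case True
      have "arccos (cos (2*pi*y)) = 2*pi*y" using rep True by (intro arccos_cos) (auto simp: pi_ge_zero)
      then have "Yr k s = y" unfolding Yr_def cw[symmetric] by simp
      then have "g1 k s = (x,y)" using g1_val[OF k, of s] unfolding s_def by simp
      then show ?thesis using tp zxy by (metis UnI1 rangeI image_eqI)
    next
      case False
      have "arccos (cos (2*pi*(1-y))) = 2*pi*(1-y)" using rep False by (intro arccos_cos) (auto simp: pi_ge_zero)
      then have "Yr k s = 1 - y" unfolding Yr_def cos_one_minus cw[symmetric] by simp
      then have "g2 k s = (x,y)" using g2_val[OF k, of s] unfolding s_def by simp
      then show ?thesis using tp zxy by (metis UnI2 rangeI image_eqI)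
    qed
  qed
next
  show "torus_proj ` range (g1 k) \<union> torus_proj ` range (g2 k) \<subseteq> tangency_set k"
  proof
    fix z assume "z \<in> torus_proj ` range (g1 k) \<union> torus_proj ` range (g2 k)"
    then consider s where "z = torus_proj (g1 k s)" | s where "z = torus_proj (g2 k s)" by blast
    then show "z \<in> tangency_set k"
    proof cases
      case 1
      then obtain s where zs: "z = torus_proj (g1 k s)" by blast
      define y where "y = Yr k s"
      have y: "0 \<le> y" "y < 1" using Yr_bounds[OF k, of s] unfolding y_def by auto
      have zz: "z = (frac (y - s), y)" unfolding zs g1_val[OF k] torus_proj_def y_def[symmetric]
        using y by (simp add: frac_eq)
      have "psi_c k y = psim (psi_c k (y - frac (y - s)))" unfolding psi_shift y_def by (rule cos_Yr[OF k])
      then show ?thesis unfolding zz tangency_set_def torus_rep_def using y tangency_iff[of k "frac (y - s)" y]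
        by (simp add: frac_lt_1)
    next
      case 2
      then obtain s where zs: "z = torus_proj (g2 k s)" by blast
      define y where "y = 1 - Yr k s"
      have y: "0 \<le> y" "y < 1" using Yr_bounds[OF k, of s] unfolding y_def by auto
      have zz: "z = (frac (y - s), y)" unfolding zs g2_val[OF k] torus_proj_def y_def[symmetric]
        using y by (simp add: frac_eq)
      have "psi_c k y = psim (psi_c k (y - frac (y - s)))" unfolding psi_shift y_def psi_one_minus
        by (rule cos_Yr[OF k])
      then show ?thesis unfolding zz tangency_set_def torus_rep_def using y tangency_iff[of k "frac (y - s)" y]
        by (simp add: frac_lt_1)
    qed
  qed
qed

lemma curves_disjoint: assumes k: "k \<ge> 1"
  shows "torus_proj ` range (g1 k) \<inter> torus_proj ` range (g2 k) = {}"
proof -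
  have "\<And>s s'. snd (torus_proj (g1 k s)) < 1/2" "\<And>s s'. snd (torus_proj (g2 k s')) > 1/2"
  proof -
    fix s s'
    show "snd (torus_proj (g1 k s)) < 1/2" unfolding g1_val[OF k] torus_proj_def
      using Yr_bounds[OF k, of s] by (simp add: frac_eq)
    have "frac (1 - Yr k s') = 1 - Yr k s'" using Yr_bounds[OF k, of s'] by (simp add: frac_eq)
    then show "snd (torus_proj (g2 k s')) > 1/2" unfolding g2_val[OF k] torus_proj_def
      using Yr_bounds[OF k, of s'] by simp
  qed
  then show ?thesis by (auto, metis less_asym)
qed

lemma two_curves: "k \<ge> 1 \<Longrightarrow> two_smooth_curves (tangency_set k)"
  unfolding two_smooth_curves_def
  by (intro exI[of _ "g1 k"] exI[of _ "g2 k"]) (simp add: g1_smooth g2_smooth curves_disjoint curves_union)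


theorem theorem2:
  "\<exists>K>0. \<forall>k\<ge>K.
     two_smooth_curves (tangency_set k) \<and>
     tangency_set k \<subseteq> Delta_hat_T k \<and>
     (\<forall>x y. (x, y) \<in> torus_rep \<longrightarrow>
        frac (y - x) \<notin> {delta_star k, 1 - delta_star k} \<longrightarrow>
        ((x, y) \<in> tangency_set k \<longleftrightarrow> y \<in> Gamma_set k (frac (y - x))))"
proof (intro exI[of _ "1::real"] conjI allI impI)
  show "(0::real) < 1" by simp
next
  fix k :: real assume k: "1 \<le> k"
  show "two_smooth_curves (tangency_set k)" by (rule two_curves[OF k])
next
  fix k :: real assume k: "1 \<le> k"
  show "tangency_set k \<subseteq> Delta_hat_T k" by (rule delta_part[OF k])
next
  fix k x y :: real assume k: "1 \<le> k" and rep: "(x, y) \<in> torus_rep"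
    and ns: "frac (y - x) \<notin> {delta_star k, 1 - delta_star k}"
  show "(x, y) \<in> tangency_set k \<longleftrightarrow> y \<in> Gamma_set k (frac (y - x))"
    by (rule gamma_part[OF k rep ns])
qed

end
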